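(* Let $(V,\kappa)$ be a locally convex euclidean space and $D\neq0$ a continuous $\kappa$-skew-symmetric operator on $V$ which integrates to a smooth $\kappa$-orthogonal one-parameter group $\gamma$ on $V$, and such that $\omega_D(x,y):=\kappa(Dx,y)$ is non-degenerate (equivalently, $D$ is injective). Let $\mathfrak g=\mathfrak g(V,\kappa,D)$ and let $\lambda=(z^*,\alpha,t^* )\in\mathfrak g'$. Then the coadjoint orbit of $\lambda$ is non-trivial and semi-equicontinuous if and only if $z^*\neq0$ and $\alpha|_{D(V)}$ is $\kappa$-bounded, i.e. there is $C>0$ with $|\alpha(Dx)|\le C\kappa(Dx,Dx)^{1/2}$ for all $x\in V$. If $D(V)$ is dense in $V$, then the $\kappa$-boundedness of $\alpha|_{D(V)}$ is equivalent to the $\kappa$-boundedness of $\alpha$.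
   Context: A locally convex euclidean space is a real locally convex space with a continuous positive definite symmetric bilinear form $\kappa$. The double extension $\mathfrak g(V,\kappa,D)=\mathbb R\times V\times\mathbb R$ has bracket $[(z,v,t),(z',v',t')]=(\kappa(Dv,v'),tDv'-t'Dv,0)$; it is the Lie algebra of the group $G=\mathbb R\times V\times\mathbb R$ with $(z,v,t)(z',v',t')=(z+z'+\frac12\omega_D(v,\gamma(t)v'),v+\gamma(t)v',t+t')$. Elements of $\mathfrak g'$ are written $(z^*,\alpha,t^* )$, meaning $(z,x,t)\mapsto z^*z+\alpha(x)+t^*t$, $\alpha\in V'$. Coadjoint orbits are $\mathrm{Ad}^*(G)$-orbits; non-trivial means not a single point; $E\subseteq\mathfrak g'$ is semi-equicontinuous if $y\mapsto\sup\langle E,-y\rangle$ is bounded on a neighborhood of some point. A linear form $\beta$ on a subspace of $V$ is $\kappa$-bounded if $\sup\{|\beta(v)|:\kappa(v,v)\le1\}<\infty$. *)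

theory Defs
  imports "HOL-Analysis.Analysis" "HOL-Library.Extended_Real"
begin

class real_tvs = real_vector + t2_space +
  assumes tvs_add_continuous:
    "\<And>x y::'a. ((\<lambda>p. fst p + snd p) \<longlongrightarrow> x + y) (nhds x \<times>\<^sub>F nhds y)"
  assumes tvs_scaleR_continuous:
    "\<And>(a::real) (x::'a). ((\<lambda>p. fst p *\<^sub>R snd p) \<longlongrightarrow> a *\<^sub>R x) (nhds a \<times>\<^sub>F nhds x)"

class locally_convex = real_tvs +
  assumes locally_convex:
    "\<And>U::'a set. open U \<Longrightarrow> 0 \<in> U \<Longrightarrow> \<exists>C. open C \<and> 0 \<in> C \<and> C \<subseteq> U \<and>
          (\<forall>x\<in>C. \<forall>y\<in>C. \<forall>u::real. 0 \<le> u \<and> u \<le> 1 \<longrightarrow> (1 - u) *\<^sub>R x + u *\<^sub>R y \<in> C)"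

definition lc_euclidean_form :: "('v::locally_convex \<Rightarrow> 'v \<Rightarrow> real) \<Rightarrow> bool" where
  "lc_euclidean_form \<kappa> \<longleftrightarrow>
     (\<forall>x. linear (\<kappa> x)) \<and> (\<forall>x y. \<kappa> x y = \<kappa> y x) \<and>
     (\<forall>x. x \<noteq> 0 \<longrightarrow> \<kappa> x x > 0) \<and>
     continuous_on UNIV (\<lambda>p::'v \<times> 'v. \<kappa> (fst p) (snd p))"

text \<open>Iterated directional derivatives: iter_deriv k f x hs is
  $d^k f(x)(h_0,\dots,h_{k-1})$ where $h_i$ = hs i.\<close>

fun iter_deriv :: "nat \<Rightarrow> ('a::real_vector \<Rightarrow> 'b::{real_vector,t2_space}) \<Rightarrow> 'a \<Rightarrow> (nat \<Rightarrow> 'a) \<Rightarrow> 'b" where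
  "iter_deriv 0 f x hs = f x"
| "iter_deriv (Suc k) f x hs =
     Lim (at (0::real)) (\<lambda>t. (1 / t) *\<^sub>R (iter_deriv k f (x + t *\<^sub>R hs k) hs - iter_deriv k f x hs))"

text \<open>$C^\infty$ in the sense of Bastiani: all iterated directional derivatives exist and
  $(x,h_0,\dots,h_{k-1}) \mapsto d^k f(x)(h_0,\dots,h_{k-1})$ is continuous for every $k$
  (continuity is taken w.r.t. the product topology on 'a \<times> (nat \<Rightarrow> 'a); since
  iter_deriv k only depends on the first k directions this is the same as continuity
  on 'a \<times> 'a^k).\<close>

definition smooth_map :: "('a::{real_vector,topological_space} \<Rightarrow> 'b::{real_vector,t2_space}) \<Rightarrow> bool" where
  "smooth_map f \<longleftrightarrow>
     (\<forall>k. (\<forall>x hs. ((\<lambda>t. (1 / t) *\<^sub>R (iter_deriv k f (x + t *\<^sub>R hs k) hs - iter_deriv k f x hs))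
                     \<longlongrightarrow> iter_deriv (Suc k) f x hs) (at (0::real)))
        \<and> continuous_on UNIV (\<lambda>p::'a \<times> (nat \<Rightarrow> 'a). iter_deriv k f (fst p) (snd p)))"

definition skew_generator ::
  "('v::locally_convex \<Rightarrow> 'v \<Rightarrow> real) \<Rightarrow> ('v \<Rightarrow> 'v) \<Rightarrow> (real \<Rightarrow> 'v \<Rightarrow> 'v) \<Rightarrow> bool" where
  "skew_generator \<kappa> D \<gamma> \<longleftrightarrow>
     linear D \<and> continuous_on UNIV D \<and> (\<forall>x y. \<kappa> (D x) y = - \<kappa> x (D y)) \<and>
     \<comment> \<open>one-parameter group of \<kappa>-orthogonal continuous linear operators\<close>
     (\<forall>t. linear (\<gamma> t) \<and> continuous_on UNIV (\<gamma> t)) \<and>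
     (\<forall>t x y. \<kappa> (\<gamma> t x) (\<gamma> t y) = \<kappa> x y) \<and>
     \<gamma> 0 = id \<and> (\<forall>s t. \<gamma> (s + t) = \<gamma> s \<circ> \<gamma> t) \<and>
     \<comment> \<open>smooth action\<close>
     smooth_map (\<lambda>p::real \<times> 'v. \<gamma> (fst p) (snd p)) \<and>
     \<comment> \<open>with generator D\<close>
     (\<forall>v. ((\<lambda>h. (1 / h) *\<^sub>R (\<gamma> h v - v)) \<longlongrightarrow> D v) (at 0))"

definition omegaD :: "('v \<Rightarrow> 'v \<Rightarrow> real) \<Rightarrow> ('v \<Rightarrow> 'v) \<Rightarrow> 'v \<Rightarrow> 'v \<Rightarrow> real" where
  "omegaD \<kappa> D x y = \<kappa> (D x) y"

definition gmult ::
  "('v::locally_convex \<Rightarrow> 'v \<Rightarrow> real) \<Rightarrow> ('v \<Rightarrow> 'v) \<Rightarrow> (real \<Rightarrow> 'v \<Rightarrow> 'v)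
     \<Rightarrow> real \<times> 'v \<times> real \<Rightarrow> real \<times> 'v \<times> real \<Rightarrow> real \<times> 'v \<times> real" where
  "gmult \<kappa> D \<gamma> g h = (case g of (z, v, t) \<Rightarrow> case h of (z', v', t') \<Rightarrow>
      (z + z' + (1/2) * omegaD \<kappa> D v (\<gamma> t v'), v + \<gamma> t v', t + t'))"

definition ginv ::
  "('v::locally_convex \<Rightarrow> 'v \<Rightarrow> real) \<Rightarrow> ('v \<Rightarrow> 'v) \<Rightarrow> (real \<Rightarrow> 'v \<Rightarrow> 'v)
     \<Rightarrow> real \<times> 'v \<times> real \<Rightarrow> real \<times> 'v \<times> real" where
  "ginv \<kappa> D \<gamma> g = (THE h. gmult \<kappa> D \<gamma> g h = 0 \<and> gmult \<kappa> D \<gamma> h g = 0)"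

definition gconj where
  "gconj \<kappa> D \<gamma> g x = gmult \<kappa> D \<gamma> (gmult \<kappa> D \<gamma> g x) (ginv \<kappa> D \<gamma> g)"

definition Ad ::
  "('v::locally_convex \<Rightarrow> 'v \<Rightarrow> real) \<Rightarrow> ('v \<Rightarrow> 'v) \<Rightarrow> (real \<Rightarrow> 'v \<Rightarrow> 'v)
     \<Rightarrow> real \<times> 'v \<times> real \<Rightarrow> real \<times> 'v \<times> real \<Rightarrow> real \<times> 'v \<times> real" where
  "Ad \<kappa> D \<gamma> g x = Lim (at (0::real)) (\<lambda>s. (1 / s) *\<^sub>R gconj \<kappa> D \<gamma> g (s *\<^sub>R x))"

definition coadjoint_orbit ::
  "('v::locally_convex \<Rightarrow> 'v \<Rightarrow> real) \<Rightarrow> ('v \<Rightarrow> 'v) \<Rightarrow> (real \<Rightarrow> 'v \<Rightarrow> 'v)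
     \<Rightarrow> (real \<times> 'v \<times> real \<Rightarrow> real) \<Rightarrow> (real \<times> 'v \<times> real \<Rightarrow> real) set" where
  "coadjoint_orbit \<kappa> D \<gamma> lam = {lam \<circ> Ad \<kappa> D \<gamma> (ginv \<kappa> D \<gamma> g) | g. True}"

definition nontrivial_set :: "'a set \<Rightarrow> bool" where
  "nontrivial_set E \<longleftrightarrow> \<not> (\<exists>a. E = {a})"

definition semi_equicontinuous :: "('g::{topological_space,uminus} \<Rightarrow> real) set \<Rightarrow> bool" where
  "semi_equicontinuous E \<longleftrightarrow>
     (\<exists>y0 U (C::real). open U \<and> y0 \<in> U \<and>
        (\<forall>y\<in>U. \<bar>SUP \<mu>\<in>E. ereal (\<mu> (- y))\<bar> \<le> ereal C))"

definition kappa_bounded :: "('v \<Rightarrow> 'v \<Rightarrow> real) \<Rightarrow> 'v set \<Rightarrow> ('v \<Rightarrow> real) \<Rightarrow> bool" where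
  "kappa_bounded \<kappa> W \<beta> \<longleftrightarrow> (\<exists>C::real. \<forall>v\<in>W. \<kappa> v v \<le> 1 \<longrightarrow> \<bar>\<beta> v\<bar> \<le> C)"

end

theory Submission
  imports Defs
begin

lemma tvs_uminus: "(uminus \<longlongrightarrow> - a) (nhds (a::'a::real_tvs))"
proof -
  have 1: "((\<lambda>x::'a. ((-1::real), x)) \<longlongrightarrow> (-1, a)) (nhds a)"
    by (intro tendsto_Pair tendsto_const filterlim_ident)
  have "((\<lambda>x::'a. (-1::real) *\<^sub>R x) \<longlongrightarrow> (-1) *\<^sub>R a) (nhds a)"
    using filterlim_compose[OF tvs_scaleR_continuous[of "-1" a, folded nhds_prod] 1] by simp
  then show ?thesis by simp
qed
instance real_tvs \<subseteq> topological_ab_group_add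
  by standard (rule tvs_add_continuous, rule tvs_uminus)

lemma tvs_scaleR:
  fixes g :: "_ \<Rightarrow> 'a::real_tvs"
  assumes "(f \<longlongrightarrow> a) F" "(g \<longlongrightarrow> x) F"
  shows "((\<lambda>y. f y *\<^sub>R g y) \<longlongrightarrow> a *\<^sub>R x) F"
proof -
  have "((\<lambda>y. (f y, g y)) \<longlongrightarrow> (a,x)) F" using assms by (rule tendsto_Pair)
  from filterlim_compose[OF tvs_scaleR_continuous[of a x, folded nhds_prod] this]
  show ?thesis by simp
qed




lemma lin_cont_tendsto:
  assumes "continuous_on UNIV f" "(g \<longlongrightarrow> x) F"
  shows "((\<lambda>y. f (g y)) \<longlongrightarrow> f x) F"
  using continuous_on_tendsto_compose[OF assms(1) assms(2)] by simp

locale lcs =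
  fixes \<kappa> :: "'v::locally_convex \<Rightarrow> 'v \<Rightarrow> real" and D :: "'v \<Rightarrow> 'v" and \<gamma> :: "real \<Rightarrow> 'v \<Rightarrow> 'v"
  assumes K: "lc_euclidean_form \<kappa>" and S: "skew_generator \<kappa> D \<gamma>"
begin

lemma kl: "linear (\<kappa> x)" using K unfolding lc_euclidean_form_def by blast
lemma ksym: "\<kappa> x y = \<kappa> y x" using K unfolding lc_euclidean_form_def by blast
lemma kpos: "x \<noteq> 0 \<Longrightarrow> \<kappa> x x > 0" using K unfolding lc_euclidean_form_def by blast
lemma kcont: "continuous_on UNIV (\<lambda>p::'v \<times> 'v. \<kappa> (fst p) (snd p))"
  using K unfolding lc_euclidean_form_def by blast

lemma kr_add: "\<kappa> x (y + z) = \<kappa> x y + \<kappa> x z" using kl real_vector.linear_add by blast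
lemma kr_scale: "\<kappa> x (c *\<^sub>R y) = c * \<kappa> x y" using kl linear_cmul by fastforce
lemma kr_diff: "\<kappa> x (y - z) = \<kappa> x y - \<kappa> x z" using kl linear_diff by blast
lemma kr_minus: "\<kappa> x (- y) = - \<kappa> x y" using kl linear_neg by blast
lemma kr_zero: "\<kappa> x 0 = 0" using kl linear_0 by blast
lemma kl_add: "\<kappa> (y + z) x = \<kappa> y x + \<kappa> z x" by (metis ksym kr_add)
lemma kl_scale: "\<kappa> (c *\<^sub>R y) x = c * \<kappa> y x" by (metis ksym kr_scale)
lemma kl_diff: "\<kappa> (y - z) x = \<kappa> y x - \<kappa> z x" by (metis ksym kr_diff)
lemma kl_minus: "\<kappa> (- y) x = - \<kappa> y x" by (metis ksym kr_minus)
lemma kl_zero: "\<kappa> 0 x = 0" by (metis ksym kr_zero)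
lemmas ksimps = kr_add kr_scale kr_diff kr_minus kr_zero kl_add kl_scale kl_diff kl_minus kl_zero

lemma knn: "\<kappa> x x \<ge> 0" using kpos[of x] by (cases "x = 0") (auto simp: kr_zero)
lemma kzero_iff: "\<kappa> x x = 0 \<longleftrightarrow> x = 0" by (metis kpos kr_zero less_irrefl)

lemma k_tendsto:
  assumes "(f \<longlongrightarrow> x) F" "(g \<longlongrightarrow> y) F"
  shows "((\<lambda>s. \<kappa> (f s) (g s)) \<longlongrightarrow> \<kappa> x y) F"
  using continuous_on_tendsto_compose[OF kcont tendsto_Pair[OF assms]] by simp

lemma Dlin: "linear D" using S unfolding skew_generator_def by blast
lemma Dcont: "continuous_on UNIV D" using S unfolding skew_generator_def by blast
lemma Dskew: "\<kappa> (D x) y = - \<kappa> x (D y)" using S unfolding skew_generator_def by blast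
lemma glin: "linear (\<gamma> t)" using S unfolding skew_generator_def by blast
lemma gcont: "continuous_on UNIV (\<gamma> t)" using S unfolding skew_generator_def by blast
lemma gorth: "\<kappa> (\<gamma> t x) (\<gamma> t y) = \<kappa> x y" using S unfolding skew_generator_def by blast
lemma g0: "\<gamma> 0 x = x" using S unfolding skew_generator_def by simp
lemma gadd: "\<gamma> (s + t) x = \<gamma> s (\<gamma> t x)" using S unfolding skew_generator_def by simp
lemma gsmooth: "smooth_map (\<lambda>p::real \<times> 'v. \<gamma> (fst p) (snd p))"
  using S unfolding skew_generator_def by blast
lemma ggen: "((\<lambda>h. (1 / h) *\<^sub>R (\<gamma> h v - v)) \<longlongrightarrow> D v) (at 0)"
  using S unfolding skew_generator_def by blast

lemma D_add: "D (x + y) = D x + D y" using Dlin real_vector.linear_add by blast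
lemma D_scale: "D (c *\<^sub>R y) = c *\<^sub>R D y" using Dlin linear_cmul by blast
lemma D_diff: "D (x - y) = D x - D y" using Dlin linear_diff by blast
lemma D_minus: "D (- y) = - D y" using Dlin linear_neg by blast
lemma D_zero: "D 0 = 0" using Dlin linear_0 by blast
lemma g_add: "\<gamma> t (x + y) = \<gamma> t x + \<gamma> t y" using glin real_vector.linear_add by blast
lemma g_scale: "\<gamma> t (c *\<^sub>R y) = c *\<^sub>R \<gamma> t y" using glin linear_cmul by blast
lemma g_diff: "\<gamma> t (x - y) = \<gamma> t x - \<gamma> t y" using glin linear_diff by blast
lemma g_minus: "\<gamma> t (- y) = - \<gamma> t y" using glin linear_neg by blast
lemma g_zero: "\<gamma> t 0 = 0" using glin linear_0 by blast
lemmas lsimps = D_add D_scale D_diff D_minus D_zero g_add g_scale g_diff g_minus g_zero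

lemma kDself: "\<kappa> (D x) x = 0" using Dskew[of x x] ksym[of x "D x"] by simp

lemma ginvl: "\<gamma> (- t) (\<gamma> t x) = x" using gadd[of "-t" t x] g0 by simp
lemma ginvr: "\<gamma> t (\<gamma> (- t) x) = x" using gadd[of t "-t" x] g0 by simp

lemma Dg_comm: "D (\<gamma> s v) = \<gamma> s (D v)"
proof -
  have 1: "((\<lambda>h. (1 / h) *\<^sub>R (\<gamma> h (\<gamma> s v) - \<gamma> s v)) \<longlongrightarrow> D (\<gamma> s v)) (at 0)" by (rule ggen)
  have "((\<lambda>h. \<gamma> s ((1 / h) *\<^sub>R (\<gamma> h v - v))) \<longlongrightarrow> \<gamma> s (D v)) (at 0)"
    by (rule lin_cont_tendsto[OF gcont ggen])
  moreover have "\<gamma> s ((1 / h) *\<^sub>R (\<gamma> h v - v)) = (1 / h) *\<^sub>R (\<gamma> h (\<gamma> s v) - \<gamma> s v)" for h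
    using gadd[of h s v] gadd[of s h v] by (simp add: lsimps add.commute)
  ultimately have 2: "((\<lambda>h. (1 / h) *\<^sub>R (\<gamma> h (\<gamma> s v) - \<gamma> s v)) \<longlongrightarrow> \<gamma> s (D v)) (at 0)" by simp
  show ?thesis using tendsto_unique[OF trivial_limit_at 1 2] .
qed

lemma gjoint: "continuous_on UNIV (\<lambda>p::real \<times> 'v. \<gamma> (fst p) (snd p))"
proof -
  have H1: "continuous_on UNIV (\<lambda>p::(real \<times> 'v) \<times> (nat \<Rightarrow> real \<times> 'v). \<gamma> (fst (fst p)) (snd (fst p)))"
  proof -
    have "continuous_on UNIV (\<lambda>p::(real \<times> 'v) \<times> (nat \<Rightarrow> real \<times> 'v). iter_deriv 0 (\<lambda>p::real \<times> 'v. \<gamma> (fst p) (snd p)) (fst p) (snd p))"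
      using gsmooth unfolding smooth_map_def by blast
    then show ?thesis by (simp only: iter_deriv.simps)
  qed
  have H2: "continuous_on UNIV (\<lambda>q::real \<times> 'v. (q, (\<lambda>_::nat. (0::real \<times> 'v))))"
    by (intro continuous_on_Pair continuous_on_id continuous_on_const)
  from continuous_on_compose2[OF H1 H2 subset_UNIV] show ?thesis by simp
qed

lemma g_tendsto:
  assumes "(f \<longlongrightarrow> s) F" "(g \<longlongrightarrow> x) F"
  shows "((\<lambda>y. \<gamma> (f y) (g y)) \<longlongrightarrow> \<gamma> s x) F"
proof -
  have "((\<lambda>y. (\<lambda>p. \<gamma> (fst p) (snd p)) (f y, g y)) \<longlongrightarrow> (\<lambda>p. \<gamma> (fst p) (snd p)) (s, x)) F"
    by (rule continuous_on_tendsto_compose[OF gjoint tendsto_Pair[OF assms]]) auto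
  then show ?thesis by (simp only: fst_conv snd_conv)
qed

end


context lcs begin

lemma ginv_eq: "ginv \<kappa> D \<gamma> (z, v, t) = (- z, - \<gamma> (- t) v, - t)"
  unfolding ginv_def
proof (rule the_equality)
  show "gmult \<kappa> D \<gamma> (z, v, t) (- z, - \<gamma> (- t) v, - t) = 0 \<and> gmult \<kappa> D \<gamma> (- z, - \<gamma> (- t) v, - t) (z, v, t) = 0"
    unfolding gmult_def omegaD_def by (simp add: lsimps ksimps ginvr ginvl kDself zero_prod_def)
next
  fix h assume "gmult \<kappa> D \<gamma> (z, v, t) h = 0 \<and> gmult \<kappa> D \<gamma> h (z, v, t) = 0"
  then have h: "gmult \<kappa> D \<gamma> (z, v, t) h = 0" by blast
  obtain z' v' t' where hh: "h = (z', v', t')" by (cases h) auto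
  from h have e1: "z + z' + 1/2 * \<kappa> (D v) (\<gamma> t v') = 0" and e2: "v + \<gamma> t v' = 0" and e3: "t + t' = 0"
    unfolding hh gmult_def omegaD_def by (simp_all add: zero_prod_def)
  from e2 have "\<gamma> (- t) (v + \<gamma> t v') = 0" by (simp add: lsimps)
  then have v': "v' = - \<gamma> (- t) v" by (simp add: lsimps ginvl eq_neg_iff_add_eq_0 add.commute)
  then have "\<gamma> t v' = - v" by (simp add: lsimps ginvr)
  with e1 have "z' = - z" by (simp add: ksimps kDself)
  with v' e3 show "h = (- z, - \<gamma> (- t) v, - t)" unfolding hh by simp
qed

lemma gcomp: "\<gamma> (t + r) (\<gamma> (- t) v) = \<gamma> r v"
  by (metis add.commute gadd ginvr)
lemma gcomp': "\<gamma> (r + t) (\<gamma> (- t) v) = \<gamma> r v"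
  by (metis gadd ginvr)

lemma gconj_eq: "gconj \<kappa> D \<gamma> (z, v, t) (a, w, r) =
   (a + 1/2 * \<kappa> (D v) (\<gamma> t w) - 1/2 * \<kappa> (D (v + \<gamma> t w)) (\<gamma> r v), v + \<gamma> t w - \<gamma> r v, r)"
  unfolding gconj_def ginv_eq gmult_def omegaD_def
  by (simp add: lsimps ksimps gcomp gcomp' algebra_simps)

lemma Ad_eq: "Ad \<kappa> D \<gamma> (z, v, t) (a, w, r) =
   (a + \<kappa> (D v) (\<gamma> t w) - r / 2 * \<kappa> (D v) (D v), \<gamma> t w - r *\<^sub>R D v, r)"
proof -
  define Q where "Q s = (1/s) *\<^sub>R (\<gamma> (s*r) v - v)" for s
  have sr: "((\<lambda>s::real. s * r) \<longlongrightarrow> 0) (at 0)"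
    by (auto intro!: tendsto_eq_intros)
  have Q: "(Q \<longlongrightarrow> r *\<^sub>R D v) (at 0)"
  proof (cases "r = 0")
    case True
    then have "Q = (\<lambda>_. 0)" by (intro ext) (simp add: Q_def g0)
    with True show ?thesis by simp
  next
    case False
    have "filterlim (\<lambda>s::real. s * r) (at 0) (at 0)"
      using False by (intro filterlim_atI sr) (auto simp: eventually_at_filter)
    from filterlim_compose[OF ggen[of v] this]
    have "((\<lambda>s. (1 / (s * r)) *\<^sub>R (\<gamma> (s * r) v - v)) \<longlongrightarrow> D v) (at 0)" .
    from tvs_scaleR[OF tendsto_const this, of r]
    have "((\<lambda>s. r *\<^sub>R ((1 / (s * r)) *\<^sub>R (\<gamma> (s * r) v - v))) \<longlongrightarrow> r *\<^sub>R D v) (at 0)" .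
    moreover have "r *\<^sub>R ((1 / (s * r)) *\<^sub>R (\<gamma> (s * r) v - v)) = Q s" for s
      using False by (simp add: Q_def)
    ultimately show ?thesis by simp
  qed
  have gv: "((\<lambda>s. \<gamma> (s * r) v) \<longlongrightarrow> v) (at 0)"
    using g_tendsto[OF sr tendsto_const, of v] by (simp add: g0)
  have c1: "((\<lambda>s. a + 1/2 * \<kappa> (D v) (\<gamma> t w) - 1/2 * \<kappa> (D v) (Q s) - 1/2 * \<kappa> (D (\<gamma> t w)) (\<gamma> (s * r) v))
     \<longlongrightarrow> a + \<kappa> (D v) (\<gamma> t w) - r / 2 * \<kappa> (D v) (D v)) (at 0)"
  proof -
    have "((\<lambda>s. a + 1/2 * \<kappa> (D v) (\<gamma> t w) - 1/2 * \<kappa> (D v) (Q s) - 1/2 * \<kappa> (D (\<gamma> t w)) (\<gamma> (s * r) v))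
     \<longlongrightarrow> a + 1/2 * \<kappa> (D v) (\<gamma> t w) - 1/2 * \<kappa> (D v) (r *\<^sub>R D v) - 1/2 * \<kappa> (D (\<gamma> t w)) v) (at 0)"
      by (intro tendsto_intros k_tendsto Q gv)
    moreover have "\<kappa> (D (\<gamma> t w)) v = - \<kappa> (D v) (\<gamma> t w)"
      using Dskew[of "\<gamma> t w" v] ksym by simp
    ultimately show ?thesis by (simp add: ksimps algebra_simps)
  qed
  have c2: "((\<lambda>s. \<gamma> t w - Q s) \<longlongrightarrow> \<gamma> t w - r *\<^sub>R D v) (at 0)"
    by (intro tendsto_intros Q)
  have lim: "((\<lambda>s. (a + 1/2 * \<kappa> (D v) (\<gamma> t w) - 1/2 * \<kappa> (D v) (Q s) - 1/2 * \<kappa> (D (\<gamma> t w)) (\<gamma> (s * r) v),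
       \<gamma> t w - Q s, r)) \<longlongrightarrow> (a + \<kappa> (D v) (\<gamma> t w) - r / 2 * \<kappa> (D v) (D v), \<gamma> t w - r *\<^sub>R D v, r)) (at 0)"
    by (intro tendsto_Pair c1 c2 tendsto_const)
  have eq: "(1 / s) *\<^sub>R gconj \<kappa> D \<gamma> (z, v, t) (s *\<^sub>R (a, w, r)) =
     (a + 1/2 * \<kappa> (D v) (\<gamma> t w) - 1/2 * \<kappa> (D v) (Q s) - 1/2 * \<kappa> (D (\<gamma> t w)) (\<gamma> (s * r) v),
       \<gamma> t w - Q s, r)" if "s \<noteq> 0" for s
    using that unfolding Q_def
    by (simp add: gconj_eq lsimps ksimps kDself algebra_simps mult.commute[of s r])
  have "((\<lambda>s. (1 / s) *\<^sub>R gconj \<kappa> D \<gamma> (z, v, t) (s *\<^sub>R (a, w, r))) \<longlongrightarrow>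
     (a + \<kappa> (D v) (\<gamma> t w) - r / 2 * \<kappa> (D v) (D v), \<gamma> t w - r *\<^sub>R D v, r)) (at 0)"
  proof (rule Lim_transform_eventually[OF lim])
    have "eventually (\<lambda>s. s \<noteq> (0::real)) (at 0)" by (simp add: eventually_at_filter)
    then show "\<forall>\<^sub>F s in at 0. (a + 1/2 * \<kappa> (D v) (\<gamma> t w) - 1/2 * \<kappa> (D v) (Q s) - 1/2 * \<kappa> (D (\<gamma> t w)) (\<gamma> (s * r) v),
       \<gamma> t w - Q s, r) = (1 / s) *\<^sub>R gconj \<kappa> D \<gamma> (z, v, t) (s *\<^sub>R (a, w, r))"
      by (rule eventually_mono) (rule eq[symmetric])
  qed
  then show ?thesis unfolding Ad_def by (rule tendsto_Lim[OF trivial_limit_at])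
qed

end



definition muf where
  "muf \<kappa> D \<gamma> lam v t = (\<lambda>(a, w, r). lam (a + \<kappa> (D v) (\<gamma> t w) - r / 2 * \<kappa> (D v) (D v), \<gamma> t w - r *\<^sub>R D v, r))"

lemma cont_vimage_open: "continuous_on UNIV f \<Longrightarrow> open B \<Longrightarrow> open (f -` B)"
  using continuous_on_open_vimage[of UNIV f] by auto

context lcs begin

lemma orbit_eq: "coadjoint_orbit \<kappa> D \<gamma> lam = {muf \<kappa> D \<gamma> lam v t | v t. True}"
proof (rule set_eqI, rule iffI)
  fix x assume "x \<in> coadjoint_orbit \<kappa> D \<gamma> lam"
  then obtain g where x: "x = lam \<circ> Ad \<kappa> D \<gamma> (ginv \<kappa> D \<gamma> g)" unfolding coadjoint_orbit_def by blast
  obtain z v t where g: "g = (z, v, t)" by (cases g) auto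
  have "x = muf \<kappa> D \<gamma> lam (- \<gamma> (- t) v) (- t)"
    unfolding x g ginv_eq by (auto simp: muf_def Ad_eq fun_eq_iff)
  then show "x \<in> {muf \<kappa> D \<gamma> lam v t | v t. True}" by blast
next
  fix x assume "x \<in> {muf \<kappa> D \<gamma> lam v t | v t. True}"
  then obtain v t where x: "x = muf \<kappa> D \<gamma> lam v t" by blast
  have "ginv \<kappa> D \<gamma> (0, - \<gamma> (- t) v, - t) = (0, v, t)"
    by (simp add: ginv_eq lsimps ginvr)
  then have "x = lam \<circ> Ad \<kappa> D \<gamma> (ginv \<kappa> D \<gamma> (0, - \<gamma> (- t) v, - t))"
    by (auto simp: x muf_def Ad_eq fun_eq_iff)
  then show "x \<in> coadjoint_orbit \<kappa> D \<gamma> lam" unfolding coadjoint_orbit_def by blast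
qed

definition nk where "nk x = sqrt (\<kappa> x x)"

lemma nk_nonneg: "nk x \<ge> 0" by (simp add: nk_def knn)
lemma nk_sq: "(nk x)\<^sup>2 = \<kappa> x x" by (simp add: nk_def knn)

lemma CS_sq: "(\<kappa> x y)\<^sup>2 \<le> \<kappa> x x * \<kappa> y y"
proof (cases "x = 0")
  case True then show ?thesis by (simp add: ksimps)
next
  case False
  then have p: "\<kappa> x x > 0" by (rule kpos)
  define c where "c = \<kappa> x y / \<kappa> x x"
  have "0 \<le> \<kappa> (y - c *\<^sub>R x) (y - c *\<^sub>R x)" by (rule knn)
  also have "\<dots> = \<kappa> y y - 2 * c * \<kappa> x y + c\<^sup>2 * \<kappa> x x"
    by (simp add: ksimps ksym[of y x] power2_eq_square algebra_simps)
  also have "\<dots> = \<kappa> y y - (\<kappa> x y)\<^sup>2 / \<kappa> x x"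
    using p by (simp add: c_def power2_eq_square field_simps)
  finally have "(\<kappa> x y)\<^sup>2 / \<kappa> x x \<le> \<kappa> y y" by simp
  then show ?thesis using p by (simp add: field_simps mult.commute)
qed

lemma CS: "\<bar>\<kappa> x y\<bar> \<le> nk x * nk y"
proof -
  have "\<bar>\<kappa> x y\<bar> = sqrt ((\<kappa> x y)\<^sup>2)" by simp
  also have "\<dots> \<le> sqrt (\<kappa> x x * \<kappa> y y)" using CS_sq real_sqrt_le_mono by blast
  also have "\<dots> = nk x * nk y" by (simp add: nk_def real_sqrt_mult)
  finally show ?thesis .
qed

lemma nk_triangle: "nk (x + y) \<le> nk x + nk y"
proof -
  have "\<kappa> (x + y) (x + y) = \<kappa> x x + 2 * \<kappa> x y + \<kappa> y y" by (simp add: ksimps ksym[of y x])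
  also have "\<dots> \<le> (nk x)\<^sup>2 + 2 * (nk x * nk y) + (nk y)\<^sup>2"
    using CS[of x y] by (simp add: nk_sq)
  also have "\<dots> = (nk x + nk y)\<^sup>2" by (simp add: power2_eq_square algebra_simps)
  finally have "sqrt (\<kappa> (x + y) (x + y)) \<le> sqrt ((nk x + nk y)\<^sup>2)" using real_sqrt_le_mono by blast
  then show ?thesis using nk_nonneg[of x] nk_nonneg[of y] by (simp add: nk_def[of "x+y"])
qed

lemma nk_scale: "nk (c *\<^sub>R x) = \<bar>c\<bar> * nk x"
  by (simp add: nk_def ksimps real_sqrt_mult mult.assoc[symmetric] power2_eq_square[symmetric])

lemma nk_minus: "nk (- x) = nk x" by (simp add: nk_def ksimps)
lemma nk_diff: "nk (x - y) \<le> nk x + nk y"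
  using nk_triangle[of x "- y"] by (simp add: nk_minus)
lemma nk_g: "nk (\<gamma> t x) = nk x" by (simp add: nk_def gorth)
lemma nk_zero: "nk 0 = 0" by (simp add: nk_def ksimps)

lemma nk_sum: "nk (sum f A) \<le> (\<Sum>i\<in>A. nk (f i))"
proof (induction A rule: infinite_finite_induct)
  case (infinite A) then show ?case by (simp add: nk_zero)
next
  case empty then show ?case by (simp add: nk_zero)
next
  case (insert x F)
  then show ?case using nk_triangle[of "f x" "sum f F"] by simp
qed

lemma nk_cont: "continuous_on UNIV nk"
proof -
  have "continuous_on UNIV (\<lambda>x. (\<lambda>p. \<kappa> (fst p) (snd p)) (x, x))"
    by (rule continuous_on_compose2[OF kcont _ subset_UNIV]) (intro continuous_intros)
  then have "continuous_on UNIV (\<lambda>x. \<kappa> x x)" by simp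
  then show ?thesis unfolding nk_def by (intro continuous_intros)
qed

lemma kk_cont: "continuous_on UNIV (\<lambda>x. \<kappa> x x)"
proof -
  have "continuous_on UNIV (\<lambda>x. (\<lambda>p. \<kappa> (fst p) (snd p)) (x, x))"
    by (rule continuous_on_compose2[OF kcont _ subset_UNIV]) (intro continuous_intros)
  then show ?thesis by simp
qed

lemma alpha_inv:
  fixes \<alpha> :: "'v \<Rightarrow> real"
  assumes "linear \<alpha>" "continuous_on UNIV \<alpha>" "\<forall>x. \<alpha> (D x) = 0"
  shows "\<alpha> (\<gamma> t w) = \<alpha> w"
proof -
  define f where "f s = \<alpha> (\<gamma> s w)" for s
  have "DERIV f s :> 0" for s
  proof -
    have "((\<lambda>h. \<alpha> ((1 / h) *\<^sub>R (\<gamma> h (\<gamma> s w) - \<gamma> s w))) \<longlongrightarrow> \<alpha> (D (\<gamma> s w))) (at 0)"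
      by (rule lin_cont_tendsto[OF assms(2) ggen])
    moreover have "\<alpha> ((1 / h) *\<^sub>R (\<gamma> h (\<gamma> s w) - \<gamma> s w)) = (f (s + h) - f s) / h" for h
      using assms(1) gadd[of h s w] by (simp add: f_def linear_cmul linear_diff add.commute divide_inverse mult.commute)
    ultimately show ?thesis using assms(3) by (simp add: DERIV_def)
  qed
  from DERIV_const_ratio_const[of 0 t f 0, OF _ this] have "t \<noteq> 0 \<Longrightarrow> f t = f 0" by simp
  then show ?thesis by (cases "t = 0") (auto simp: f_def g0)
qed

end


context lcs begin

lemma alpha_gamma_bound:
  fixes \<alpha> :: "'v \<Rightarrow> real"
  assumes lin: "linear \<alpha>" and cont: "continuous_on UNIV \<alpha>" and C: "C \<ge> 0"
    and hb: "\<forall>x. \<bar>\<alpha> (D x)\<bar> \<le> C * nk (D x)"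
  shows "\<bar>\<alpha> (\<gamma> t w - w)\<bar> \<le> C * (2 * nk w + 1) + 1"
proof (cases "t = 0")
  case True
  then show ?thesis using C nk_nonneg[of w] by (simp add: g0 linear_0[OF lin])
next
  case False
  define T where "T = \<bar>t\<bar>"
  have T: "T > 0" using False by (simp add: T_def)
  define \<epsilon> where "\<epsilon> = 1 / (1 + T)"
  have eps: "\<epsilon> > 0" "T * \<epsilon> \<le> 1" using T by (auto simp: \<epsilon>_def field_simps)
  have c1: "continuous_on UNIV (\<lambda>p::'v \<times> real. \<gamma> (snd p) (fst p))"
    by (rule continuous_on_compose2[OF gjoint _ subset_UNIV, where f = "\<lambda>p. (snd p, fst p)", simplified])
       (intro continuous_intros)
  have c2: "continuous_on UNIV (\<lambda>p::'v \<times> real. \<bar>\<alpha> (\<gamma> (snd p) (fst p))\<bar>)"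
    by (intro continuous_intros continuous_on_compose2[OF cont c1 subset_UNIV])
  have c3: "continuous_on UNIV (\<lambda>p::'v \<times> real. nk (fst p))"
    by (intro continuous_on_compose2[OF nk_cont _ subset_UNIV] continuous_intros)
  define W where "W = {p::'v \<times> real. \<bar>\<alpha> (\<gamma> (snd p) (fst p))\<bar> < \<epsilon> \<and> nk (fst p) < \<epsilon>}"
  have oW: "open W" unfolding W_def
    by (intro open_Collect_conj open_Collect_less c2 c3 continuous_on_const)
  have sub: "{0} \<times> {-T..T} \<subseteq> W"
    using eps by (auto simp: W_def g_zero linear_0[OF lin] nk_zero)
  obtain X0 where X0: "0 \<in> X0" "open X0" "X0 \<times> {-T..T} \<subseteq> W"
    using Elementary_Topology.tube_lemma[OF compact_Icc oW sub] by blast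
  define Q where "Q h = (1 / h) *\<^sub>R (\<gamma> h w - w) - D w" for h
  have "(Q \<longlongrightarrow> D w - D w) (at 0)" unfolding Q_def by (intro tendsto_diff ggen tendsto_const)
  then have "(Q \<longlongrightarrow> 0) (at 0)" by simp
  from topological_tendstoD[OF this X0(2) X0(1)]
  obtain d where d: "d > 0" "\<And>h. h \<noteq> 0 \<Longrightarrow> dist h 0 < d \<Longrightarrow> Q h \<in> X0"
    unfolding eventually_at by auto
  obtain N :: nat where N: "T / d < real N" using reals_Archimedean2 by blast
  have Npos: "real N > 0" using N T d(1) by (smt (verit) divide_pos_pos)
  define h where "h = t / real N"
  have h0: "h \<noteq> 0" using False Npos by (simp add: h_def)
  have habs: "\<bar>h\<bar> * real N = T" using Npos by (simp add: h_def T_def abs_divide)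
  have hd: "\<bar>h\<bar> < d"
  proof -
    have "T < d * real N" using N d(1) by (simp add: field_simps)
    then have "\<bar>h\<bar> * real N < d * real N" using habs by linarith
    then show ?thesis using mult_right_less_imp_less[of "\<bar>h\<bar>" "real N" d] by simp
  qed
  define q where "q = Q h"
  have qX: "q \<in> X0" using d(2)[OF h0] hd by (simp add: q_def)
  have si: "real i * h \<in> {-T..T}" if "i < N" for i
  proof -
    have "\<bar>real i * h\<bar> = real i * \<bar>h\<bar>" by (simp add: abs_mult)
    also have "\<dots> \<le> real N * \<bar>h\<bar>" using that by (intro mult_right_mono) auto
    finally show ?thesis using habs by (auto simp: abs_le_iff mult.commute)
  qed
  have qb: "\<bar>\<alpha> (\<gamma> (real i * h) q)\<bar> < \<epsilon>" if "i < N" for i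
  proof -
    have "(q, real i * h) \<in> W" using X0(3) qX si[OF that] by blast
    then show ?thesis unfolding W_def by simp
  qed
  have qn: "nk q < \<epsilon>"
  proof -
    have "(q, 0) \<in> W" using X0(3) qX T by auto
    then show ?thesis unfolding W_def by simp
  qed
  have hw: "\<gamma> h w - w = h *\<^sub>R (q + D w)"
    using h0 by (simp add: q_def Q_def)
  define R where "R = (\<Sum>i<N. h *\<^sub>R \<gamma> (real i * h) q)"
  define y where "y = (\<Sum>i<N. h *\<^sub>R \<gamma> (real i * h) (D w))"
  have tel: "\<gamma> t w - w = (\<Sum>i<N. \<gamma> (real (Suc i) * h) w - \<gamma> (real i * h) w)"
    using sum_lessThan_telescope[of "\<lambda>i. \<gamma> (real i * h) w" N] Npos
    by (simp add: h_def g0)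
  have step: "\<gamma> (real (Suc i) * h) w - \<gamma> (real i * h) w = h *\<^sub>R \<gamma> (real i * h) q + h *\<^sub>R \<gamma> (real i * h) (D w)" for i
  proof -
    have "\<gamma> (real (Suc i) * h) w = \<gamma> (real i * h) (\<gamma> h w)"
      using gadd[of "real i * h" h w] by (simp add: algebra_simps)
    then have "\<gamma> (real (Suc i) * h) w - \<gamma> (real i * h) w = \<gamma> (real i * h) (\<gamma> h w - w)"
      by (simp add: lsimps)
    also have "\<dots> = h *\<^sub>R \<gamma> (real i * h) q + h *\<^sub>R \<gamma> (real i * h) (D w)"
      by (simp add: hw lsimps scaleR_add_right)
    finally show ?thesis .
  qed
  have eRy: "\<gamma> t w - w = R + y"
    unfolding tel R_def y_def by (simp only: step sum.distrib)
  have yD: "y = D (\<Sum>i<N. h *\<^sub>R \<gamma> (real i * h) w)"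
    unfolding y_def by (simp add: linear_sum[OF Dlin] lsimps Dg_comm)
  have aR: "\<bar>\<alpha> R\<bar> \<le> 1"
  proof -
    have "\<alpha> R = (\<Sum>i<N. h * \<alpha> (\<gamma> (real i * h) q))"
      unfolding R_def by (simp add: linear_sum[OF lin] linear_cmul[OF lin])
    also have "\<bar>\<dots>\<bar> \<le> (\<Sum>i<N. \<bar>h * \<alpha> (\<gamma> (real i * h) q)\<bar>)" by (rule sum_abs)
    also have "\<dots> \<le> (\<Sum>i<N. \<bar>h\<bar> * \<epsilon>)"
      by (intro sum_mono) (auto simp: abs_mult intro!: mult_left_mono less_imp_le[OF qb])
    also have "\<dots> = T * \<epsilon>" using habs by (simp add: mult.commute)
    finally show ?thesis using eps by linarith
  qed
  have nR: "nk R \<le> 1"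
  proof -
    have "nk R \<le> (\<Sum>i<N. nk (h *\<^sub>R \<gamma> (real i * h) q))" unfolding R_def by (rule nk_sum)
    also have "\<dots> = (\<Sum>i<N. \<bar>h\<bar> * nk q)" by (simp add: nk_scale nk_g)
    also have "\<dots> \<le> (\<Sum>i<N. \<bar>h\<bar> * \<epsilon>)"
      by (intro sum_mono mult_left_mono less_imp_le[OF qn]) auto
    also have "\<dots> = T * \<epsilon>" using habs by (simp add: mult.commute)
    finally show ?thesis using eps by linarith
  qed
  have ny: "nk y \<le> 2 * nk w + 1"
  proof -
    have "y = (\<gamma> t w - w) - R" using eRy by simp
    then have "nk y \<le> nk (\<gamma> t w - w) + nk R" using nk_diff by metis
    also have "nk (\<gamma> t w - w) \<le> 2 * nk w" using nk_diff[of "\<gamma> t w" w] by (simp add: nk_g)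
    finally show ?thesis using nR by linarith
  qed
  have "\<bar>\<alpha> y\<bar> \<le> C * nk y" using hb yD by metis
  also have "\<dots> \<le> C * (2 * nk w + 1)" using C ny by (rule mult_left_mono[rotated])
  finally have ay: "\<bar>\<alpha> y\<bar> \<le> C * (2 * nk w + 1)" .
  have "\<alpha> (\<gamma> t w - w) = \<alpha> R + \<alpha> y" using eRy by (simp add: linear_add[OF lin])
  then show ?thesis using aR ay by linarith
qed

end



lemma quad_bound:
  fixes c b d M :: real
  assumes "c < 0" "\<And>L. c * L\<^sup>2 + b * L + d \<le> M"
  shows "b\<^sup>2 \<le> 4 * (- c) * (M - d)"
proof -
  have "c * (b / (- 2 * c))\<^sup>2 + b * (b / (- 2 * c)) + d \<le> M" by (rule assms(2))
  moreover have "c * (b / (- 2 * c))\<^sup>2 + b * (b / (- 2 * c)) + d = b\<^sup>2 / (4 * (- c)) + d"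
    using assms(1) by (simp add: power2_eq_square field_simps)
  ultimately have "b\<^sup>2 / (4 * (- c)) \<le> M - d" by simp
  moreover have p: "4 * (- c) > 0" using assms(1) by simp
  ultimately have "b\<^sup>2 \<le> (M - d) * (4 * (- c))" using pos_divide_le_eq[OF p] by blast
  then show ?thesis by (metis mult.commute)
qed

lemma quad_unb:
  fixes c b d M :: real
  assumes "c > 0"
  shows "\<exists>L. c * L\<^sup>2 + b * L + d > M"
proof -
  define L where "L = (\<bar>b\<bar> + \<bar>d\<bar> + \<bar>M\<bar> + 1) / c + 1"
  have L1: "L \<ge> 1" using assms by (simp add: L_def)
  have "c * L \<ge> \<bar>b\<bar> + \<bar>d\<bar> + \<bar>M\<bar> + 1" using assms by (simp add: L_def field_simps)
  then have "c * L - \<bar>b\<bar> \<ge> \<bar>d\<bar> + \<bar>M\<bar> + 1" by linarith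
  then have "L * (c * L - \<bar>b\<bar>) \<ge> 1 * (\<bar>d\<bar> + \<bar>M\<bar> + 1)"
    using L1 by (intro mult_mono) auto
  moreover have "b * L \<ge> - \<bar>b\<bar> * L" using L1 by (cases "b \<ge> 0") auto
  ultimately have "c * L\<^sup>2 + b * L + d > M" by (simp add: power2_eq_square algebra_simps)
  then show ?thesis by blast
qed

lemma quad_max:
  fixes a B n :: real
  assumes "a > 0"
  shows "B * n - a * n\<^sup>2 \<le> B\<^sup>2 / (4 * a)"
proof -
  have "0 \<le> a * (n - B / (2 * a))\<^sup>2" using assms by simp
  also have "a * (n - B / (2 * a))\<^sup>2 = a * n\<^sup>2 - B * n + B\<^sup>2 / (4 * a)"
    using assms by (simp add: power2_eq_square field_simps)
  finally show ?thesis by simp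
qed

lemma ereal_le_abs: "(x::ereal) \<le> \<bar>x\<bar>" by (cases x) auto

lemma ereal_abs_bound:
  fixes S :: ereal
  assumes "ereal L \<le> S" "S \<le> ereal M" "- C \<le> L" "M \<le> C"
  shows "\<bar>S\<bar> \<le> ereal C"
  using assms by (cases S) auto

context lcs begin

lemma muf_val:
  fixes \<alpha> :: "'v \<Rightarrow> real"
  assumes "linear \<alpha>"
  shows "muf \<kappa> D \<gamma> (\<lambda>(z, x, t). zs * z + \<alpha> x + ts * t) v t (- (a, w, r)) =
    - zs * a - zs * \<kappa> (D v) (\<gamma> t w) + zs * r / 2 * \<kappa> (D v) (D v) - \<alpha> (\<gamma> t w) + r * \<alpha> (D v) - ts * r"
  using assms by (simp add: muf_def lsimps ksimps linear_diff linear_add linear_neg linear_cmul algebra_simps)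

lemma muf_val':
  fixes \<alpha> :: "'v \<Rightarrow> real"
  assumes "linear \<alpha>"
  shows "muf \<kappa> D \<gamma> (\<lambda>(z, x, t). zs * z + \<alpha> x + ts * t) v t (a, w, r) =
    zs * a + zs * \<kappa> (D v) (\<gamma> t w) - zs * r / 2 * \<kappa> (D v) (D v) + \<alpha> (\<gamma> t w) - r * \<alpha> (D v) + ts * r"
  using assms by (simp add: muf_def lsimps ksimps linear_diff linear_add linear_neg linear_cmul algebra_simps)

lemma amgm: "2 * \<bar>\<kappa> x y\<bar> \<le> \<kappa> x x + \<kappa> y y"
proof -
  have "0 \<le> \<kappa> (x - y) (x - y)" "0 \<le> \<kappa> (x + y) (x + y)" by (rule knn)+
  then show ?thesis by (simp add: ksimps ksym[of y x] abs_le_iff)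
qed

end


context lcs begin

lemma forward:
  fixes \<alpha> :: "'v \<Rightarrow> real"
  assumes Dn: "D \<noteq> (\<lambda>x. 0)" and lin: "linear \<alpha>" and cont: "continuous_on UNIV \<alpha>"
    and NT: "nontrivial_set (coadjoint_orbit \<kappa> D \<gamma> (\<lambda>(z, x, t). zs * z + \<alpha> x + ts * t))"
    and SE: "semi_equicontinuous (coadjoint_orbit \<kappa> D \<gamma> (\<lambda>(z, x, t). zs * z + \<alpha> x + ts * t))"
  shows "zs \<noteq> 0 \<and> kappa_bounded \<kappa> (range D) \<alpha>"
proof -
  define lam where "lam = (\<lambda>(z, x, t). zs * z + \<alpha> x + ts * t)"
  define Orb where "Orb = coadjoint_orbit \<kappa> D \<gamma> lam"
  have Orbeq: "Orb = {muf \<kappa> D \<gamma> lam v t | v t. True}" unfolding Orb_def by (rule orbit_eq)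
  from SE obtain y0 U C where U: "open U" "y0 \<in> U"
    and UC: "\<forall>y\<in>U. \<bar>SUP \<mu>\<in>Orb. ereal (\<mu> (- y))\<bar> \<le> ereal C"
    unfolding semi_equicontinuous_def Orb_def lam_def by blast
  have le: "\<mu> (- y) \<le> C" if "y \<in> U" "\<mu> \<in> Orb" for y \<mu>
  proof -
    have "ereal (\<mu> (- y)) \<le> (SUP \<mu>\<in>Orb. ereal (\<mu> (- y)))" using that(2) by (rule SUP_upper)
    also have "\<dots> \<le> \<bar>SUP \<mu>\<in>Orb. ereal (\<mu> (- y))\<bar>" by (rule ereal_le_abs)
    also have "\<dots> \<le> ereal C" using UC that(1) by blast
    finally show ?thesis by simp
  qed
  have Vle: "- zs * a - zs * \<kappa> (D v) (\<gamma> t w) + zs * r / 2 * \<kappa> (D v) (D v) - \<alpha> (\<gamma> t w) + r * \<alpha> (D v) - ts * r \<le> C"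
    if "(a, w, r) \<in> U" for a w r v t
  proof -
    have "muf \<kappa> D \<gamma> lam v t \<in> Orb" using Orbeq by blast
    from le[OF that this] show ?thesis unfolding lam_def using muf_val[OF lin] by simp
  qed
  obtain a0 w0 r0 where y0: "y0 = (a0, w0, r0)" by (cases y0) auto
  have "open ((\<lambda>\<rho>::real. (a0, w0, \<rho>)) -` U)"
    by (rule cont_vimage_open[OF _ U(1)]) (intro continuous_intros)
  moreover have "r0 \<in> (\<lambda>\<rho>::real. (a0, w0, \<rho>)) -` U" using U(2) y0 by simp
  ultimately obtain \<delta> where \<delta>: "\<delta> > 0" "\<And>\<rho>. dist \<rho> r0 < \<delta> \<Longrightarrow> (a0, w0, \<rho>) \<in> U"
    unfolding open_dist by blast
  from Dn obtain v1 where v1: "D v1 \<noteq> 0" by auto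
  have k1: "\<kappa> (D v1) (D v1) > 0" using kpos[OF v1] .
  have zs: "zs \<noteq> 0"
  proof
    assume zs0: "zs = 0"
    show False
    proof (cases "\<forall>x. \<alpha> (D x) = 0")
      case True
      have "muf \<kappa> D \<gamma> lam v t = lam" for v t
      proof (rule ext)
        fix p :: "real \<times> 'v \<times> real"
        obtain a w r where p: "p = (a, w, r)" by (cases p) auto
        show "muf \<kappa> D \<gamma> lam v t p = lam p"
          unfolding p lam_def muf_val'[OF lin] using zs0 True alpha_inv[OF lin cont True] by simp
      qed
      then have "Orb = {lam}" using Orbeq by auto
      with NT show False unfolding nontrivial_set_def Orb_def lam_def by blast
    next
      case False
      then obtain x1 where x1: "\<alpha> (D x1) \<noteq> 0" by blast
      define r1 where "r1 = (if r0 = 0 then \<delta> / 2 else r0)"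
      have r1: "r1 \<noteq> 0" using \<delta> by (simp add: r1_def)
      have r1U: "(a0, w0, r1) \<in> U" using \<delta> y0 U(2) by (auto simp: r1_def dist_real_def intro!: \<delta>(2))
      define L where "L = (C + \<bar>\<alpha> w0\<bar> + \<bar>ts * r1\<bar> + 1) / (r1 * \<alpha> (D x1))"
      have "r1 * \<alpha> (D (L *\<^sub>R x1)) = C + \<bar>\<alpha> w0\<bar> + \<bar>ts * r1\<bar> + 1"
        using r1 x1 by (simp add: L_def D_scale linear_cmul[OF lin])
      moreover have "- zs * a0 - zs * \<kappa> (D (L *\<^sub>R x1)) (\<gamma> 0 w0) + zs * r1 / 2 * \<kappa> (D (L *\<^sub>R x1)) (D (L *\<^sub>R x1))
          - \<alpha> (\<gamma> 0 w0) + r1 * \<alpha> (D (L *\<^sub>R x1)) - ts * r1 \<le> C"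
        by (rule Vle[OF r1U])
      ultimately show False using zs0 by (simp add: g0)
    qed
  qed
  have r0zs: "r0 * zs < 0"
  proof (rule ccontr)
    assume "\<not> r0 * zs < 0"
    then have nn: "r0 * zs \<ge> 0" by simp
    define r2 where "r2 = r0 + (if zs > 0 then \<delta> / 2 else - \<delta> / 2)"
    have r2U: "(a0, w0, r2) \<in> U" using \<delta> by (intro \<delta>(2)) (auto simp: r2_def dist_real_def)
    have com: "zs * r0 = r0 * zs" by (rule mult.commute)
    have zr2: "zs * r2 > 0"
    proof (cases "zs > 0")
      case True
      then have "zs * r2 = zs * r0 + zs * (\<delta> / 2)" by (simp add: r2_def distrib_left)
      moreover have "zs * (\<delta> / 2) > 0" using True \<delta> by simp
      ultimately show ?thesis using nn com by linarith
    next
      case False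
      then have zn: "zs < 0" using zs by simp
      then have "zs * r2 = zs * r0 + (- zs) * (\<delta> / 2)" using False by (simp add: r2_def algebra_simps)
      moreover have "(- zs) * (\<delta> / 2) > 0" using zn \<delta>(1) by (intro mult_pos_pos) auto
      ultimately show ?thesis using nn com by linarith
    qed
    define c where "c = zs * r2 / 2 * \<kappa> (D v1) (D v1)"
    define b where "b = - zs * \<kappa> (D v1) w0 + r2 * \<alpha> (D v1)"
    define d where "d = - zs * a0 - \<alpha> w0 - ts * r2"
    have c: "c > 0" using zr2 k1 by (simp add: c_def)
    obtain L where L: "c * L\<^sup>2 + b * L + d > C" using quad_unb[OF c] by blast
    have "- zs * a0 - zs * \<kappa> (D (L *\<^sub>R v1)) (\<gamma> 0 w0) + zs * r2 / 2 * \<kappa> (D (L *\<^sub>R v1)) (D (L *\<^sub>R v1))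
          - \<alpha> (\<gamma> 0 w0) + r2 * \<alpha> (D (L *\<^sub>R v1)) - ts * r2 \<le> C"
      by (rule Vle[OF r2U])
    moreover have "- zs * a0 - zs * \<kappa> (D (L *\<^sub>R v1)) (\<gamma> 0 w0) + zs * r2 / 2 * \<kappa> (D (L *\<^sub>R v1)) (D (L *\<^sub>R v1))
          - \<alpha> (\<gamma> 0 w0) + r2 * \<alpha> (D (L *\<^sub>R v1)) - ts * r2 = c * L\<^sup>2 + b * L + d"
      by (simp add: c_def b_def d_def g0 D_scale ksimps linear_cmul[OF lin] power2_eq_square algebra_simps)
    ultimately show False using L by simp
  qed
  have r0: "r0 \<noteq> 0" using r0zs by auto
  define c where "c = zs * r0 / 2"
  have c: "c < 0" using r0zs by (simp add: c_def mult.commute)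
  define d where "d = - zs * a0 - \<alpha> w0 - ts * r0"
  define M where "M = 4 * (- c) * (\<bar>C\<bar> + \<bar>d\<bar>)"
  have M0: "M \<ge> 0" unfolding M_def using c by (intro mult_nonneg_nonneg) auto
  define C' where "C' = (1 + M + \<bar>zs\<bar> * (1 + \<kappa> w0 w0)) / \<bar>r0\<bar>"
  have y0U: "(a0, w0, r0) \<in> U" using U(2) y0 by simp
  have "\<bar>\<alpha> x\<bar> \<le> C'" if "x \<in> range D" "\<kappa> x x \<le> 1" for x
  proof -
    from that obtain v where xv: "x = D v" by blast
    have nn: "0 \<le> 1 + M + \<bar>zs\<bar> * (1 + \<kappa> w0 w0)" using M0 knn[of w0] by simp
    show ?thesis
    proof (cases "x = 0")
      case True
      then show ?thesis using nn r0 by (simp add: C'_def linear_0[OF lin])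
    next
      case False
      define k where "k = \<kappa> x x"
      have k: "k > 0" "k \<le> 1" using kpos[OF False] that(2) by (auto simp: k_def)
      define b where "b = - zs * \<kappa> x w0 + r0 * \<alpha> x"
      have ck: "c * k < 0" using c k by (simp add: mult_neg_pos)
      have "(c * k) * L\<^sup>2 + b * L + d \<le> C" for L
      proof -
        have "- zs * a0 - zs * \<kappa> (D (L *\<^sub>R v)) (\<gamma> 0 w0) + zs * r0 / 2 * \<kappa> (D (L *\<^sub>R v)) (D (L *\<^sub>R v))
          - \<alpha> (\<gamma> 0 w0) + r0 * \<alpha> (D (L *\<^sub>R v)) - ts * r0 \<le> C"
          by (rule Vle[OF y0U])
        moreover have "- zs * a0 - zs * \<kappa> (D (L *\<^sub>R v)) (\<gamma> 0 w0) + zs * r0 / 2 * \<kappa> (D (L *\<^sub>R v)) (D (L *\<^sub>R v))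
          - \<alpha> (\<gamma> 0 w0) + r0 * \<alpha> (D (L *\<^sub>R v)) - ts * r0 = (c * k) * L\<^sup>2 + b * L + d"
          by (simp add: c_def b_def d_def k_def xv g0 D_scale ksimps linear_cmul[OF lin] power2_eq_square algebra_simps)
        ultimately show ?thesis by simp
      qed
      from quad_bound[OF ck this] have b2: "b\<^sup>2 \<le> 4 * (- (c * k)) * (C - d)" .
      have "4 * (- (c * k)) * (C - d) \<le> 4 * (- (c * k)) * (\<bar>C\<bar> + \<bar>d\<bar>)"
        using ck by (intro mult_left_mono) auto
      also have "\<dots> \<le> 4 * (- c) * (\<bar>C\<bar> + \<bar>d\<bar>)"
      proof -
        have "- (c * k) \<le> - c" using c k by (simp add: mult_le_cancel_left1)
        then show ?thesis by (intro mult_right_mono) auto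
      qed
      finally have "b\<^sup>2 \<le> M" using b2 by (simp add: M_def)
      then have bM: "\<bar>b\<bar> \<le> 1 + M"
      proof (cases "\<bar>b\<bar> \<le> 1")
        case True then show ?thesis using M0 by linarith
      next
        case False
        then have "\<bar>b\<bar> * 1 \<le> \<bar>b\<bar> * \<bar>b\<bar>" by (intro mult_left_mono) auto
        also have "\<bar>b\<bar> * \<bar>b\<bar> = b\<^sup>2" by (simp add: power2_eq_square abs_mult_self_eq)
        finally show ?thesis using \<open>b\<^sup>2 \<le> M\<close> by linarith
      qed
      have kx: "\<bar>\<kappa> x w0\<bar> \<le> 1 + \<kappa> w0 w0" using amgm[of x w0] k knn[of w0] by (simp add: k_def)
      have "\<bar>r0\<bar> * \<bar>\<alpha> x\<bar> = \<bar>b + zs * \<kappa> x w0\<bar>" by (simp add: b_def abs_mult[symmetric])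
      also have "\<dots> \<le> \<bar>b\<bar> + \<bar>zs\<bar> * \<bar>\<kappa> x w0\<bar>" by (simp add: abs_mult[symmetric] abs_triangle_ineq)
      also have "\<dots> \<le> 1 + M + \<bar>zs\<bar> * (1 + \<kappa> w0 w0)"
        using bM kx by (intro add_mono mult_left_mono) auto
      finally show ?thesis using r0 by (simp add: C'_def pos_le_divide_eq mult.commute)
    qed
  qed
  then have "kappa_bounded \<kappa> (range D) \<alpha>" unfolding kappa_bounded_def by blast
  with zs show ?thesis by blast
qed

end


context lcs begin

lemma backward:
  fixes \<alpha> :: "'v \<Rightarrow> real"
  assumes Dn: "D \<noteq> (\<lambda>x. 0)" and lin: "linear \<alpha>" and cont: "continuous_on UNIV \<alpha>"
    and zs: "zs \<noteq> 0" and KB: "kappa_bounded \<kappa> (range D) \<alpha>"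
  shows "nontrivial_set (coadjoint_orbit \<kappa> D \<gamma> (\<lambda>(z, x, t). zs * z + \<alpha> x + ts * t)) \<and>
         semi_equicontinuous (coadjoint_orbit \<kappa> D \<gamma> (\<lambda>(z, x, t). zs * z + \<alpha> x + ts * t))"
proof -
  define lam where "lam = (\<lambda>(z, x, t). zs * z + \<alpha> x + ts * t)"
  define Orb where "Orb = coadjoint_orbit \<kappa> D \<gamma> lam"
  have Orbeq: "Orb = {muf \<kappa> D \<gamma> lam v t | v t. True}" unfolding Orb_def by (rule orbit_eq)
  have m0: "muf \<kappa> D \<gamma> lam 0 0 \<in> Orb" using Orbeq by blast
  from Dn obtain v1 where v1: "D v1 \<noteq> 0" by auto
  have k1: "\<kappa> (D v1) (D v1) > 0" using kpos[OF v1] .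
  have NT: "nontrivial_set Orb"
    unfolding nontrivial_set_def
  proof
    assume "\<exists>a. Orb = {a}"
    then obtain e where e: "Orb = {e}" by blast
    have "muf \<kappa> D \<gamma> lam v1 0 \<in> Orb" using Orbeq by blast
    then have "muf \<kappa> D \<gamma> lam v1 0 (0, D v1, 0) = muf \<kappa> D \<gamma> lam 0 0 (0, D v1, 0)" using m0 e by simp
    then have "zs * \<kappa> (D v1) (D v1) = 0" unfolding lam_def muf_val'[OF lin] by (simp add: g0 D_zero ksimps)
    then show False using zs k1 by simp
  qed
  from KB obtain C0 where C0: "\<And>x. x \<in> range D \<Longrightarrow> \<kappa> x x \<le> 1 \<Longrightarrow> \<bar>\<alpha> x\<bar> \<le> C0"
    unfolding kappa_bounded_def by blast
  have C0n: "C0 \<ge> 0" using C0[of 0] D_zero by (auto simp: ksimps linear_0[OF lin])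
  have hb: "\<forall>x. \<bar>\<alpha> (D x)\<bar> \<le> C0 * nk (D x)"
  proof
    fix x
    show "\<bar>\<alpha> (D x)\<bar> \<le> C0 * nk (D x)"
    proof (cases "D x = 0")
      case True then show ?thesis by (simp add: linear_0[OF lin] nk_zero)
    next
      case False
      define n where "n = nk (D x)"
      have n: "n > 0" using kpos[OF False] by (simp add: n_def nk_def)
      have "D ((1 / n) *\<^sub>R x) \<in> range D" by blast
      moreover have "\<kappa> (D ((1 / n) *\<^sub>R x)) (D ((1 / n) *\<^sub>R x)) = 1"
        using n nk_sq[of "D x"] kpos[OF False] by (simp add: D_scale ksimps n_def power2_eq_square)
      ultimately have "\<bar>\<alpha> (D ((1 / n) *\<^sub>R x))\<bar> \<le> C0" using C0 by simp
      then have "\<bar>\<alpha> (D x)\<bar> / n \<le> C0" using n by (simp add: D_scale linear_cmul[OF lin] abs_mult)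
      then show ?thesis using n by (simp add: n_def pos_divide_le_eq mult.commute)
    qed
  qed
  have ag: "\<bar>\<alpha> (\<gamma> t w - w)\<bar> \<le> C0 * (2 * nk w + 1) + 1" for t w
    by (rule alpha_gamma_bound[OF lin cont C0n hb])
  define r0 :: real where "r0 = (if zs > 0 then -1 else 1)"
  have zr0: "zs * r0 = - \<bar>zs\<bar>" by (simp add: r0_def)
  define U where "U = {y::real \<times> 'v \<times> real. \<bar>fst y\<bar> < 1 \<and> \<kappa> (fst (snd y)) (fst (snd y)) < 1 \<and>
       \<bar>\<alpha> (fst (snd y))\<bar> < 1 \<and> \<bar>snd (snd y) - r0\<bar> < 1/2}"
  have ck: "continuous_on UNIV (\<lambda>y::real \<times> 'v \<times> real. \<kappa> (fst (snd y)) (fst (snd y)))"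
    by (intro continuous_on_compose2[OF kk_cont _ subset_UNIV] continuous_intros)
  have ca: "continuous_on UNIV (\<lambda>y::real \<times> 'v \<times> real. \<bar>\<alpha> (fst (snd y))\<bar>)"
    by (intro continuous_intros continuous_on_compose2[OF cont _ subset_UNIV])
  have oU: "open U" unfolding U_def
    by (intro open_Collect_conj open_Collect_less ck ca continuous_intros)
  have y0U: "(0, 0, r0) \<in> U" by (simp add: U_def ksimps linear_0[OF lin])
  define B where "B = \<bar>zs\<bar> + 2 * C0"
  define M where "M = \<bar>zs\<bar> + B\<^sup>2 / \<bar>zs\<bar> + 3 * C0 + 2 + 2 * \<bar>ts\<bar>"
  define Cb where "Cb = M + \<bar>zs\<bar> + 1 + 2 * \<bar>ts\<bar>"
  have M0: "M \<ge> 0" using C0n by (simp add: M_def)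
  have bound: "\<bar>SUP \<mu>\<in>Orb. ereal (\<mu> (- y))\<bar> \<le> ereal Cb" if yU: "y \<in> U" for y
  proof -
    obtain a w r where y: "y = (a, w, r)" by (cases y) auto
    from yU have a: "\<bar>a\<bar> < 1" and w: "\<kappa> w w < 1" and aw: "\<bar>\<alpha> w\<bar> < 1" and r: "\<bar>r - r0\<bar> < 1/2"
      by (auto simp: U_def y)
    have nkw: "nk w \<le> 1" using w by (simp add: nk_def)
    have rabs: "\<bar>r\<bar> \<le> 2"
    proof -
      have "r0 = -1 \<or> r0 = 1" by (simp add: r0_def)
      moreover have "- 1/2 < r - r0" "r - r0 < 1/2" using r by linarith+
      ultimately show ?thesis by (auto simp: abs_le_iff)
    qed
    have ub: "- zs * a - zs * \<kappa> (D v) (\<gamma> t w) + zs * r / 2 * \<kappa> (D v) (D v) - \<alpha> (\<gamma> t w) + r * \<alpha> (D v) - ts * r \<le> M" for v t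
    proof -
      define n where "n = nk (D v)"
      have n0: "n \<ge> 0" by (simp add: n_def nk_nonneg)
      have k: "\<kappa> (D v) (D v) = n\<^sup>2" by (simp add: n_def nk_sq)
      have t1: "- zs * a \<le> \<bar>zs\<bar>"
      proof -
        have "\<bar>zs * a\<bar> \<le> \<bar>zs\<bar> * 1" using a unfolding abs_mult by (intro mult_left_mono) auto
        then show ?thesis by linarith
      qed
      have t2: "- zs * \<kappa> (D v) (\<gamma> t w) \<le> \<bar>zs\<bar> * n"
      proof -
        have "\<bar>\<kappa> (D v) (\<gamma> t w)\<bar> \<le> n * nk w" using CS[of "D v" "\<gamma> t w"] by (simp add: n_def nk_g)
        also have "\<dots> \<le> n" using nkw n0 by (simp add: mult_left_le)
        finally have "\<bar>zs * \<kappa> (D v) (\<gamma> t w)\<bar> \<le> \<bar>zs\<bar> * n" unfolding abs_mult by (intro mult_left_mono) auto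
        then show ?thesis by linarith
      qed
      have t3: "zs * r / 2 * \<kappa> (D v) (D v) \<le> - (\<bar>zs\<bar> / 4) * n\<^sup>2"
      proof -
        have "zs * r = zs * r0 + zs * (r - r0)" by (simp add: algebra_simps)
        moreover have "\<bar>zs * (r - r0)\<bar> \<le> \<bar>zs\<bar> * (1/2)" using r unfolding abs_mult by (intro mult_left_mono) auto
        ultimately have "zs * r \<le> - \<bar>zs\<bar> / 2" using zr0 by linarith
        then have "zs * r / 2 * n\<^sup>2 \<le> (- \<bar>zs\<bar> / 2) / 2 * n\<^sup>2"
          by (intro mult_right_mono divide_right_mono) auto
        then show ?thesis by (simp add: k)
      qed
      have t4: "- \<alpha> (\<gamma> t w) \<le> 3 * C0 + 2"
      proof -
        have "\<alpha> (\<gamma> t w) = \<alpha> w + \<alpha> (\<gamma> t w - w)" by (simp add: linear_diff[OF lin])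
        moreover have "C0 * (2 * nk w + 1) \<le> C0 * 3" using nkw C0n by (intro mult_left_mono) auto
        ultimately show ?thesis using ag[of t w] aw by linarith
      qed
      have t5: "r * \<alpha> (D v) \<le> 2 * C0 * n"
      proof -
        have "\<bar>r * \<alpha> (D v)\<bar> = \<bar>r\<bar> * \<bar>\<alpha> (D v)\<bar>" by (simp add: abs_mult)
        also have "\<dots> \<le> 2 * (C0 * n)" using hb rabs by (intro mult_mono) (auto simp: n_def)
        finally show ?thesis by linarith
      qed
      have t6: "- ts * r \<le> 2 * \<bar>ts\<bar>"
      proof -
        have "\<bar>ts * r\<bar> \<le> \<bar>ts\<bar> * 2" using rabs unfolding abs_mult by (intro mult_left_mono) auto
        then show ?thesis by linarith
      qed
      have q: "B * n - (\<bar>zs\<bar> / 4) * n\<^sup>2 \<le> B\<^sup>2 / (4 * (\<bar>zs\<bar> / 4))"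
        by (rule quad_max) (use zs in simp)
      have "B * n = \<bar>zs\<bar> * n + 2 * C0 * n" by (simp add: B_def algebra_simps)
      with t1 t2 t3 t4 t5 t6 q show ?thesis by (simp add: M_def)
    qed
    have lb: "- zs * a - \<alpha> w - ts * r \<ge> - (\<bar>zs\<bar> + 1 + 2 * \<bar>ts\<bar>)"
    proof -
      have "\<bar>zs * a\<bar> \<le> \<bar>zs\<bar> * 1" using a unfolding abs_mult by (intro mult_left_mono) auto
      moreover have "\<bar>ts * r\<bar> \<le> \<bar>ts\<bar> * 2" using rabs unfolding abs_mult by (intro mult_left_mono) auto
      ultimately show ?thesis using aw by linarith
    qed
    show ?thesis
    proof (rule ereal_abs_bound)
      show "ereal (muf \<kappa> D \<gamma> lam 0 0 (- y)) \<le> (SUP \<mu>\<in>Orb. ereal (\<mu> (- y)))"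
        using m0 by (rule SUP_upper)
      show "(SUP \<mu>\<in>Orb. ereal (\<mu> (- y))) \<le> ereal M"
      proof (rule SUP_least)
        fix \<mu> assume "\<mu> \<in> Orb"
        then obtain v t where "\<mu> = muf \<kappa> D \<gamma> lam v t" using Orbeq by blast
        then show "ereal (\<mu> (- y)) \<le> ereal M" using ub[of v t] muf_val[OF lin, of zs ts v t a w r] unfolding y lam_def by simp
      qed
      show "- Cb \<le> muf \<kappa> D \<gamma> lam 0 0 (- y)"
        using lb M0 muf_val[OF lin, of zs ts 0 0 a w r] unfolding y lam_def by (simp add: Cb_def D_zero ksimps linear_0[OF lin] g0)
      show "M \<le> Cb" by (simp add: Cb_def)
    qed
  qed
  have "semi_equicontinuous Orb"
    unfolding semi_equicontinuous_def using oU y0U bound by blast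
  with NT show ?thesis unfolding Orb_def lam_def by blast
qed

lemma dense_part:
  fixes \<alpha> :: "'v \<Rightarrow> real"
  assumes lin: "linear \<alpha>" and cont: "continuous_on UNIV \<alpha>" and dense: "closure (range D) = UNIV"
  shows "kappa_bounded \<kappa> (range D) \<alpha> \<longleftrightarrow> kappa_bounded \<kappa> UNIV \<alpha>"
proof
  assume "kappa_bounded \<kappa> (range D) \<alpha>"
  then obtain C0 where C0: "\<And>x. x \<in> range D \<Longrightarrow> \<kappa> x x \<le> 1 \<Longrightarrow> \<bar>\<alpha> x\<bar> \<le> C0"
    unfolding kappa_bounded_def by blast
  have "\<bar>\<alpha> v\<bar> \<le> 2 * (C0 + 1)" if "\<kappa> v v \<le> 1" for v
  proof -
    define u where "u = (1/2) *\<^sub>R v"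
    have ku: "\<kappa> u u < 1" using that by (simp add: u_def ksimps)
    define A where "A = {x. \<kappa> x x < 1 \<and> \<bar>\<alpha> x - \<alpha> u\<bar> < 1}"
    have oA: "open A" unfolding A_def
      by (intro open_Collect_conj open_Collect_less kk_cont continuous_intros continuous_on_compose2[OF cont _ subset_UNIV])
    have uA: "u \<in> A" using ku by (simp add: A_def)
    have "u \<in> closure (range D)" using dense by simp
    then have "range D \<inter> A \<noteq> {}" using oA uA unfolding closure_iff_nhds_not_empty by blast
    then obtain x where x: "x \<in> range D" "x \<in> A" by blast
    then have "\<bar>\<alpha> x\<bar> \<le> C0" using C0 by (simp add: A_def)
    moreover have "\<bar>\<alpha> x - \<alpha> u\<bar> < 1" using x(2) by (simp add: A_def)
    ultimately have "\<bar>\<alpha> u\<bar> \<le> C0 + 1" by linarith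
    moreover have "\<alpha> v = 2 * \<alpha> u" by (simp add: u_def linear_cmul[OF lin])
    ultimately show ?thesis by simp
  qed
  then show "kappa_bounded \<kappa> UNIV \<alpha>" unfolding kappa_bounded_def by blast
next
  assume "kappa_bounded \<kappa> UNIV \<alpha>"
  then show "kappa_bounded \<kappa> (range D) \<alpha>" unfolding kappa_bounded_def by blast
qed

end

theorem proposition3p4:
  fixes \<kappa> :: "'v::locally_convex \<Rightarrow> 'v \<Rightarrow> real"
    and D :: "'v \<Rightarrow> 'v" and \<gamma> :: "real \<Rightarrow> 'v \<Rightarrow> 'v"
    and zs ts :: real and \<alpha> :: "'v \<Rightarrow> real"
  assumes "lc_euclidean_form \<kappa>"
    and "skew_generator \<kappa> D \<gamma>"
    and "D \<noteq> (\<lambda>x. 0)"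
    and "\<forall>x. (\<forall>y. omegaD \<kappa> D x y = 0) \<longrightarrow> x = 0"
    and "linear \<alpha>" and "continuous_on UNIV \<alpha>"
  shows "((nontrivial_set (coadjoint_orbit \<kappa> D \<gamma> (\<lambda>(z, x, t). zs * z + \<alpha> x + ts * t)) \<and>
          semi_equicontinuous (coadjoint_orbit \<kappa> D \<gamma> (\<lambda>(z, x, t). zs * z + \<alpha> x + ts * t)))
         \<longleftrightarrow> (zs \<noteq> 0 \<and> kappa_bounded \<kappa> (range D) \<alpha>)) \<and>
         (closure (range D) = UNIV \<longrightarrow>
           (kappa_bounded \<kappa> (range D) \<alpha> \<longleftrightarrow> kappa_bounded \<kappa> UNIV \<alpha>))"
proof -
  interpret lcs \<kappa> D \<gamma> by (rule lcs.intro[OF assms(1,2)])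
  have A: "(nontrivial_set (coadjoint_orbit \<kappa> D \<gamma> (\<lambda>(z, x, t). zs * z + \<alpha> x + ts * t)) \<and>
          semi_equicontinuous (coadjoint_orbit \<kappa> D \<gamma> (\<lambda>(z, x, t). zs * z + \<alpha> x + ts * t)))
         \<longleftrightarrow> (zs \<noteq> 0 \<and> kappa_bounded \<kappa> (range D) \<alpha>)"
    using forward[OF assms(3,5,6)] backward[OF assms(3,5,6)] by blast
  have B: "closure (range D) = UNIV \<longrightarrow>
           (kappa_bounded \<kappa> (range D) \<alpha> \<longleftrightarrow> kappa_bounded \<kappa> UNIV \<alpha>)"
    using dense_part[OF assms(5,6)] by blast
  show ?thesis using A B by blast
qed

end
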